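(* Let $n\ge 3$ and $a<b<c$ be elements of $\mathcal{C}_n=\{0,1,\dots,n-1\}$. Let $\triangle=\triangle^{(n)}\{a,b,c\}$, let $\mathcal{IT}=\{\alpha\in\triangle:\ \alpha(a)=a,\ \alpha(c)=c\}$ be the idempotent triangle, let $\mathcal{RI}$ be the set of right identities of $\triangle$, and let $Id\left(\mathcal{STR}^{(n)}\{a,c\}\right)=\{a_kc_{n-k}:\ a+1\le k\le c\}$. Then: (i) $\mathcal{RI}$ is a subsemiring of $\mathcal{IT}$ with exactly $(b-a)(c-b)$ elements; (ii) $\mathcal{IT}\setminus\mathcal{RI}$ is a subsemiring of $\mathcal{IT}$ with exactly $\frac12\left((c-b)^2+(b-a)^2+c-a\right)$ elements; (iii) both $Id\left(\mathcal{STR}^{(n)}\{a,c\}\right)$ and $\mathcal{IT}\setminus\mathcal{RI}$ are ideals of the semiring $\mathcal{IT}$.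
   Context: $\mathcal{C}_n=\{0,1,\dots,n-1\}$ is the chain with its usual order, regarded as a join-semilattice with $x\vee y=\max(x,y)$. $\widehat{\mathcal{E}}_{\mathcal{C}_n}$ denotes the set of all endomorphisms of $(\mathcal{C}_n,\vee)$, i.e. all order-preserving maps $\alpha:\mathcal{C}_n\to\mathcal{C}_n$ (it is not required that $\alpha(0)=0$). It is a semiring with addition $(\alpha+\beta)(x)=\max(\alpha(x),\beta(x))$ and multiplication written "first $\alpha$, then $\beta$": $(\alpha\cdot\beta)(x)=\beta(\alpha(x))$. For $x_1<\dots<x_r$ in $\mathcal{C}_n$ and nonnegative integers $k_1,\dots,k_r$ with $k_1+\dots+k_r=n$, the notation $(x_1)_{k_1}(x_2)_{k_2}\cdots(x_r)_{k_r}$ denotes the map sending the first $k_1$ elements $0,\dots,k_1-1$ to $x_1$, the next $k_2$ elements to $x_2$, and so on; a subscript $1$ may be omitted and a factor with subscript $0$ omitted. $\overline{x}$ denotes the constant map with value $x$. The triangle $\triangle^{(n)}\{a,b,c\}$ is the set of all $\alpha\in\widehat{\mathcal{E}}_{\mathcal{C}_n}$ with image contained in $\{a,b,c\}$ (a subsemiring). A right identity of $\triangle$ is an element $e\in\triangle$ with $\alpha\cdot e=\alpha$ for all $\alpha\in\triangle$. A subsemiring is a nonempty subset closed under $+$ and $\cdot$; an ideal $I$ of a semiring $R$ is a nonempty subset with $I+I\subseteq I$, $RI\subseteq I$, $IR\subseteq I$. *)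

theory Defs
  imports "HOL-Library.FuncSet"
begin

text \<open>The chain C_n = {0..<n}; endomorphisms of (C_n, max) are the order-preserving
  self-maps of {0..<n}, represented as extensional functions (undefined outside {0..<n}).\<close>

definition chain :: "nat \<Rightarrow> nat set" where
  "chain n = {0..<n}"

definition endo :: "nat \<Rightarrow> (nat \<Rightarrow> nat) set" where
  "endo n = {\<alpha> \<in> chain n \<rightarrow>\<^sub>E chain n. mono_on (chain n) \<alpha>}"

definition eplus :: "nat \<Rightarrow> (nat \<Rightarrow> nat) \<Rightarrow> (nat \<Rightarrow> nat) \<Rightarrow> (nat \<Rightarrow> nat)" where
  "eplus n \<alpha> \<beta> = (\<lambda>x\<in>chain n. max (\<alpha> x) (\<beta> x))"

definition emult :: "nat \<Rightarrow> (nat \<Rightarrow> nat) \<Rightarrow> (nat \<Rightarrow> nat) \<Rightarrow> (nat \<Rightarrow> nat)" where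
  "emult n \<alpha> \<beta> = (\<lambda>x\<in>chain n. \<beta> (\<alpha> x))"

definition triangle :: "nat \<Rightarrow> nat \<Rightarrow> nat \<Rightarrow> nat \<Rightarrow> (nat \<Rightarrow> nat) set" where
  "triangle n a b c = {\<alpha> \<in> endo n. \<alpha> ` chain n \<subseteq> {a, b, c}}"

definition idem_triangle :: "nat \<Rightarrow> nat \<Rightarrow> nat \<Rightarrow> nat \<Rightarrow> (nat \<Rightarrow> nat) set" where
  "idem_triangle n a b c = {\<alpha> \<in> triangle n a b c. \<alpha> a = a \<and> \<alpha> c = c}"

definition right_identities :: "nat \<Rightarrow> (nat \<Rightarrow> nat) set \<Rightarrow> (nat \<Rightarrow> nat) set" where
  "right_identities n T = {e \<in> T. \<forall>\<alpha>\<in>T. emult n \<alpha> e = \<alpha>}"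

definition step_map :: "nat \<Rightarrow> nat \<Rightarrow> nat \<Rightarrow> nat \<Rightarrow> (nat \<Rightarrow> nat)" where
  "step_map n a c k = (\<lambda>x\<in>chain n. if x < k then a else c)"

definition Id_STR :: "nat \<Rightarrow> nat \<Rightarrow> nat \<Rightarrow> (nat \<Rightarrow> nat) set" where
  "Id_STR n a c = {step_map n a c k | k. a + 1 \<le> k \<and> k \<le> c}"

definition is_subsemiring :: "nat \<Rightarrow> (nat \<Rightarrow> nat) set \<Rightarrow> (nat \<Rightarrow> nat) set \<Rightarrow> bool" where
  "is_subsemiring n S R \<longleftrightarrow> S \<noteq> {} \<and> S \<subseteq> R \<and>
     (\<forall>x\<in>S. \<forall>y\<in>S. eplus n x y \<in> S \<and> emult n x y \<in> S)"

definition is_ideal :: "nat \<Rightarrow> (nat \<Rightarrow> nat) set \<Rightarrow> (nat \<Rightarrow> nat) set \<Rightarrow> bool" where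
  "is_ideal n I R \<longleftrightarrow> I \<noteq> {} \<and> I \<subseteq> R \<and>
     (\<forall>x\<in>I. \<forall>y\<in>I. eplus n x y \<in> I) \<and>
     (\<forall>r\<in>R. \<forall>x\<in>I. emult n r x \<in> I \<and> emult n x r \<in> I)"

end

theory Submission
  imports Defs
begin

definition thr :: "nat \<Rightarrow> nat \<Rightarrow> nat \<Rightarrow> nat \<Rightarrow> nat \<Rightarrow> nat \<Rightarrow> (nat \<Rightarrow> nat)" where
  "thr n a b c k l = (\<lambda>x\<in>chain n. if x < k then a else if x < l then b else c)"

lemma IT_iff: "\<alpha> \<in> idem_triangle n a b c \<longleftrightarrow> \<alpha> \<in> chain n \<rightarrow>\<^sub>E chain n \<and> mono_on (chain n) \<alpha>
   \<and> (\<forall>x\<in>chain n. \<alpha> x \<in> {a,b,c}) \<and> \<alpha> a = a \<and> \<alpha> c = c"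
  by (auto simp: idem_triangle_def triangle_def endo_def)

lemma IT_eplus:
  assumes "a<b" "b<c" "c<n" "\<alpha> \<in> idem_triangle n a b c" "\<beta> \<in> idem_triangle n a b c"
  shows "eplus n \<alpha> \<beta> \<in> idem_triangle n a b c"
proof -
  have ch: "a \<in> chain n" "c \<in> chain n" using assms by (auto simp: chain_def)
  note A = assms(4)[unfolded IT_iff] and B = assms(5)[unfolded IT_iff]
  have 1: "eplus n \<alpha> \<beta> \<in> chain n \<rightarrow>\<^sub>E chain n"
    unfolding eplus_def restrict_PiE_iff using A B by (auto simp: max_def)
  have 2: "mono_on (chain n) (eplus n \<alpha> \<beta>)"
  proof (rule mono_onI)
    fix x y assume "x \<in> chain n" "y \<in> chain n" "x \<le> y"
    then have "\<alpha> x \<le> \<alpha> y" "\<beta> x \<le> \<beta> y" using A B by (auto dest: mono_onD)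
    then show "eplus n \<alpha> \<beta> x \<le> eplus n \<alpha> \<beta> y" using \<open>x \<in> chain n\<close> \<open>y \<in> chain n\<close>
      by (simp add: eplus_def max_def)
  qed
  have 3: "\<forall>x\<in>chain n. eplus n \<alpha> \<beta> x \<in> {a,b,c}"
    using A B by (simp add: eplus_def max_def)
  show ?thesis unfolding IT_iff using 1 2 3 A B ch by (simp add: eplus_def)
qed

lemma IT_emult:
  assumes "a<b" "b<c" "c<n" "\<alpha> \<in> idem_triangle n a b c" "\<beta> \<in> idem_triangle n a b c"
  shows "emult n \<alpha> \<beta> \<in> idem_triangle n a b c"
proof -
  have ch: "a \<in> chain n" "c \<in> chain n" using assms by (auto simp: chain_def)
  note A = assms(4)[unfolded IT_iff] and B = assms(5)[unfolded IT_iff]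
  have ac: "\<And>x. x \<in> chain n \<Longrightarrow> \<alpha> x \<in> chain n" using A by auto
  have 1: "emult n \<alpha> \<beta> \<in> chain n \<rightarrow>\<^sub>E chain n"
    unfolding emult_def restrict_PiE_iff using B ac by auto
  have 2: "mono_on (chain n) (emult n \<alpha> \<beta>)"
  proof (rule mono_onI)
    fix x y assume "x \<in> chain n" "y \<in> chain n" "x \<le> y"
    then have "\<alpha> x \<le> \<alpha> y" using A by (auto dest: mono_onD)
    then have "\<beta> (\<alpha> x) \<le> \<beta> (\<alpha> y)" using B ac \<open>x \<in> chain n\<close> \<open>y \<in> chain n\<close> by (meson mono_onD)
    then show "emult n \<alpha> \<beta> x \<le> emult n \<alpha> \<beta> y" using \<open>x \<in> chain n\<close> \<open>y \<in> chain n\<close>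
      by (simp add: emult_def)
  qed
  have 3: "\<forall>x\<in>chain n. emult n \<alpha> \<beta> x \<in> {a,b,c}"
    using B ac by (simp add: emult_def)
  show ?thesis unfolding IT_iff using 1 2 3 A B ch by (simp add: emult_def)
qed

lemma thr_in_IT:
  assumes "a<b" "b<c" "c<n" "a < k" "k \<le> l" "l \<le> c"
  shows "thr n a b c k l \<in> idem_triangle n a b c"
  unfolding IT_iff thr_def using assms
  by (auto simp: restrict_PiE_iff chain_def intro!: monotone_onI)

lemma IT_thr:
  assumes "a<b" "b<c" "c<n" "\<alpha> \<in> idem_triangle n a b c"
  shows "\<exists>k l. a < k \<and> k \<le> l \<and> l \<le> c \<and> \<alpha> = thr n a b c k l"
proof -
  have A1: "\<alpha> \<in> chain n \<rightarrow>\<^sub>E chain n" and A2: "mono_on (chain n) \<alpha>"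
    and A3: "\<forall>x\<in>chain n. \<alpha> x \<in> {a,b,c}" and A4: "\<alpha> a = a" and A5: "\<alpha> c = c"
    using assms(4) unfolding IT_iff by blast+
  have mo: "\<And>x y. x < n \<Longrightarrow> y < n \<Longrightarrow> x \<le> y \<Longrightarrow> \<alpha> x \<le> \<alpha> y"
  proof -
    fix x y assume "x < n" "y < n" "x \<le> y"
    then show "\<alpha> x \<le> \<alpha> y" using A2 mono_onD[of "chain n" \<alpha> x y] by (simp add: chain_def)
  qed
  have vals: "\<And>x. x < n \<Longrightarrow> \<alpha> x \<in> {a,b,c}" using A3 by (simp add: chain_def)
  define k where "k = (LEAST x. x<n \<and> \<alpha> x \<noteq> a)"
  define l where "l = (LEAST x. x<n \<and> \<alpha> x = c)"
  have ex1: "c<n \<and> \<alpha> c \<noteq> a" "c < n \<and> \<alpha> c = c" using A5 assms(1-3) by auto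
  have k1: "k<n \<and> \<alpha> k \<noteq> a" unfolding k_def by (rule LeastI, rule ex1(1))
  have k2: "k \<le> c" unfolding k_def by (rule Least_le, rule ex1(1))
  have l1: "l<n \<and> \<alpha> l = c" unfolding l_def by (rule LeastI, rule ex1(2))
  have l2: "l \<le> c" unfolding l_def by (rule Least_le, rule ex1(2))
  have kl: "k \<le> l" unfolding k_def using l1 assms(1-3) by (intro Least_le) auto
  have Ak: "\<alpha> x = a" if x: "x < k" for x
  proof -
    have "\<not> (x<n \<and> \<alpha> x \<noteq> a)" using x unfolding k_def by (rule not_less_Least)
    then show ?thesis using x k1 by simp
  qed
  have Bl: "\<alpha> x \<noteq> c" if x: "x < l" for x
  proof -
    have "\<not> (x<n \<and> \<alpha> x = c)" using x unfolding l_def by (rule not_less_Least)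
    then show ?thesis using x l1 by simp
  qed
  have Ck: "\<And>x. x < n \<Longrightarrow> k \<le> x \<Longrightarrow> \<alpha> x \<noteq> a"
  proof -
    fix x assume x: "x < n" "k \<le> x"
    have "\<alpha> k \<in> {b,c}" using vals[of k] k1 by auto
    then have "\<alpha> k > a" using assms(1-3) by auto
    then show "\<alpha> x \<noteq> a" using mo[of k x] x k1 by auto
  qed
  have Dl: "\<And>x. x < n \<Longrightarrow> l \<le> x \<Longrightarrow> \<alpha> x = c"
  proof -
    fix x assume x: "x < n" "l \<le> x"
    have "\<alpha> x \<ge> c" using mo[of l x] x l1 by auto
    then show "\<alpha> x = c" using vals[OF x(1)] assms(1-3) by auto
  qed
  have ak: "a < k"
  proof (rule ccontr)
    assume "\<not> a < k"
    then have "k \<le> a" by simp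
    then have "\<alpha> a \<noteq> a" using Ck[of a] assms(1-3) by simp
    then show False using A4 by simp
  qed
  have "\<alpha> = thr n a b c k l"
  proof
    fix x show "\<alpha> x = thr n a b c k l x"
    proof (cases "x \<in> chain n")
      case True
      then have x: "x < n" by (simp add: chain_def)
      show ?thesis
      proof (cases "x < k")
        case True
        then show ?thesis using Ak[OF True] x by (simp add: thr_def chain_def)
      next
        case nk: False
        show ?thesis
        proof (cases "x < l")
          case True
          then show ?thesis using nk Bl[OF True] Ck[of x] x vals[OF x] by (auto simp: thr_def chain_def)
        next
          case False
          then show ?thesis using nk Dl[of x] x by (auto simp: thr_def chain_def)
        qed
      qed
    next
      case False
      have "\<alpha> x = undefined" by (rule PiE_arb[OF A1 False])
      then show ?thesis using False by (simp add: thr_def)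
    qed
  qed
  then show ?thesis using ak kl l2 by blast
qed

lemma thr_inj:
  assumes "a<b" "b<c" "c<n"
  shows "inj_on (\<lambda>(k,l). thr n a b c k l) {(k,l). a < k \<and> k \<le> l \<and> l \<le> c}"
proof (rule inj_onI, clarsimp)
  fix k l k' l'
  assume h: "a < k" "k \<le> l" "l \<le> c" "a < k'" "k' \<le> l'" "l' \<le> c"
    "thr n a b c k l = thr n a b c k' l'"
  have e: "\<And>x. x < n \<Longrightarrow> thr n a b c k l x = thr n a b c k' l' x" using h(7) by simp
  have "k = k'"
  proof (rule ccontr)
    assume "k \<noteq> k'"
    then have "k < k' \<or> k' < k" by auto
    then show False
    proof
      assume "k < k'" then show False using e[of k] h assms by (auto simp: thr_def chain_def split: if_splits)
    next
      assume "k' < k" then show False using e[of k'] h assms by (auto simp: thr_def chain_def split: if_splits)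
    qed
  qed
  moreover have "l = l'"
  proof (rule ccontr)
    assume "l \<noteq> l'"
    then have "l < l' \<or> l' < l" by auto
    then show False
    proof
      assume "l < l'" then show False using e[of l] h assms \<open>k = k'\<close> by (auto simp: thr_def chain_def split: if_splits)
    next
      assume "l' < l" then show False using e[of l'] h assms \<open>k = k'\<close> by (auto simp: thr_def chain_def split: if_splits)
    qed
  qed
  ultimately show "k = k' \<and> l = l'" by simp
qed

lemma thr_b:
  assumes "a<b" "b<c" "c<n"
  shows "thr n a b c k l b = (if b < k then a else if b < l then b else c)"
  using assms by (simp add: thr_def chain_def)

lemma tri_card:
  "2 * card {(k,l). u < k \<and> k \<le> l \<and> l \<le> u + (d::nat)} = d * (d + 1)"
proof (induction d)
  case 0
  have e: "{(k,l). u < k \<and> k \<le> l \<and> l \<le> (u::nat)} = {}" by auto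
  show ?case unfolding add_0_right e by simp
next
  case (Suc d)
  let ?S = "\<lambda>d. {(k,l). u < k \<and> k \<le> l \<and> l \<le> u + (d::nat)}"
  have eq: "?S (Suc d) = ?S d \<union> (\<lambda>k. (k, u + Suc d)) ` {u<..u + Suc d}" by auto
  have fin: "finite (?S d)" by (rule finite_subset[of _ "{..u+d} \<times> {..u+d}"]) auto
  have dis: "?S d \<inter> (\<lambda>k. (k, u + Suc d)) ` {u<..u + Suc d} = {}" by auto
  have c2: "card ((\<lambda>k. (k, u + Suc d)) ` {u<..u + Suc d}) = Suc d"
    by (subst card_image) (auto simp: inj_on_def)
  have "card (?S (Suc d)) = card (?S d) + Suc d"
    unfolding eq using fin dis c2 by (subst card_Un_disjoint) auto
  then show ?case using Suc.IH by (simp add: algebra_simps)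
qed

lemma RI_char:
  assumes "a<b" "b<c" "c<n"
  shows "right_identities n (triangle n a b c) = {\<alpha> \<in> idem_triangle n a b c. \<alpha> b = b}"
proof
  have ch: "a \<in> chain n" "b \<in> chain n" "c \<in> chain n" "0 \<in> chain n" using assms by (auto simp: chain_def)
  show "right_identities n (triangle n a b c) \<subseteq> {\<alpha> \<in> idem_triangle n a b c. \<alpha> b = b}"
  proof
    fix e assume e: "e \<in> right_identities n (triangle n a b c)"
    have fx: "e v = v" if v: "v \<in> {a,b,c}" for v
    proof -
      have vc: "v \<in> chain n" using v ch by auto
      have "(\<lambda>x\<in>chain n. v) \<in> triangle n a b c"
        using v vc by (auto simp: triangle_def endo_def restrict_PiE_iff intro!: monotone_onI)
      then have "emult n (\<lambda>x\<in>chain n. v) e = (\<lambda>x\<in>chain n. v)"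
        using e by (auto simp: right_identities_def)
      then have "emult n (\<lambda>x\<in>chain n. v) e 0 = (\<lambda>x\<in>chain n. v) 0" by simp
      then show "e v = v" using ch by (simp add: emult_def)
    qed
    show "e \<in> {\<alpha> \<in> idem_triangle n a b c. \<alpha> b = b}"
      using e fx by (auto simp: right_identities_def idem_triangle_def)
  qed
  show "{\<alpha> \<in> idem_triangle n a b c. \<alpha> b = b} \<subseteq> right_identities n (triangle n a b c)"
  proof
    fix e assume e: "e \<in> {\<alpha> \<in> idem_triangle n a b c. \<alpha> b = b}"
    have "emult n \<alpha> e = \<alpha>" if al: "\<alpha> \<in> triangle n a b c" for \<alpha>
    proof
      fix x show "emult n \<alpha> e x = \<alpha> x"
      proof (cases "x \<in> chain n")
        case True
        then have "\<alpha> x \<in> {a,b,c}" using al by (auto simp: triangle_def)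
        then show ?thesis using True e by (auto simp: emult_def idem_triangle_def)
      next
        case False
        have "\<alpha> \<in> chain n \<rightarrow>\<^sub>E chain n" using al by (simp add: triangle_def endo_def)
        then have "\<alpha> x = undefined" using False by (rule PiE_arb)
        then show ?thesis using False by (simp add: emult_def)
      qed
    qed
    then show "e \<in> right_identities n (triangle n a b c)"
      using e by (auto simp: right_identities_def idem_triangle_def)
  qed
qed

lemma ID_char:
  assumes "a<b" "b<c" "c<n"
  shows "Id_STR n a c = {\<alpha> \<in> idem_triangle n a b c. \<forall>x\<in>chain n. \<alpha> x \<noteq> b}"
proof
  have sm: "step_map n a c k = thr n a b c k k" for k by (auto simp: step_map_def thr_def)
  show "Id_STR n a c \<subseteq> {\<alpha> \<in> idem_triangle n a b c. \<forall>x\<in>chain n. \<alpha> x \<noteq> b}"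
  proof
    fix \<alpha> assume "\<alpha> \<in> Id_STR n a c"
    then obtain k where k: "a + 1 \<le> k" "k \<le> c" "\<alpha> = step_map n a c k" by (auto simp: Id_STR_def)
    have "\<alpha> \<in> idem_triangle n a b c" using k sm thr_in_IT[OF assms, of k k] by auto
    moreover have "\<forall>x\<in>chain n. \<alpha> x \<noteq> b" using k assms by (auto simp: step_map_def)
    ultimately show "\<alpha> \<in> {\<alpha> \<in> idem_triangle n a b c. \<forall>x\<in>chain n. \<alpha> x \<noteq> b}" by simp
  qed
  show "{\<alpha> \<in> idem_triangle n a b c. \<forall>x\<in>chain n. \<alpha> x \<noteq> b} \<subseteq> Id_STR n a c"
  proof
    fix \<alpha> assume h: "\<alpha> \<in> {\<alpha> \<in> idem_triangle n a b c. \<forall>x\<in>chain n. \<alpha> x \<noteq> b}"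
    then obtain k l where kl: "a < k" "k \<le> l" "l \<le> c" "\<alpha> = thr n a b c k l"
      using IT_thr[OF assms] by blast
    have "k = l"
    proof (rule ccontr)
      assume "k \<noteq> l"
      then have "\<alpha> k = b" using kl assms by (auto simp: thr_def chain_def)
      moreover have "k \<in> chain n" using kl assms by (auto simp: chain_def)
      ultimately show False using h by auto
    qed
    then have "\<alpha> = step_map n a c k" using kl sm by simp
    then show "\<alpha> \<in> Id_STR n a c" using kl by (auto simp: Id_STR_def)
  qed
qed

theorem theorem33:
  fixes n a b c :: nat
  assumes "n \<ge> 3" and "a < b" and "b < c" and "c < n"
  defines "IT \<equiv> idem_triangle n a b c"
      and "RI \<equiv> right_identities n (triangle n a b c)"
  shows "(is_subsemiring n RI IT \<and> card RI = (b - a) * (c - b)) \<and>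
         (is_subsemiring n (IT - RI) IT \<and>
          2 * card (IT - RI) = (c - b)^2 + (b - a)^2 + (c - a)) \<and>
         (is_ideal n (Id_STR n a c) IT \<and> is_ideal n (IT - RI) IT)"
proof -
  have ab: "a<b" "b<c" "c<n" by fact+
  have ch: "a \<in> chain n" "b \<in> chain n" "c \<in> chain n" using ab by (auto simp: chain_def)
  have RIc: "RI = {\<alpha> \<in> IT. \<alpha> b = b}" unfolding RI_def IT_def by (rule RI_char[OF ab])
  have IDc: "Id_STR n a c = {\<alpha> \<in> IT. \<forall>x\<in>chain n. \<alpha> x \<noteq> b}" unfolding IT_def by (rule ID_char[OF ab])
  have DIc: "IT - RI = {\<alpha> \<in> IT. \<alpha> b \<noteq> b}" using RIc by auto
  have vals: "\<And>\<alpha> x. \<alpha> \<in> IT \<Longrightarrow> x \<in> chain n \<Longrightarrow> \<alpha> x \<in> {a,b,c}"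
    unfolding IT_def IT_iff by auto
  have fxd: "\<And>\<alpha>. \<alpha> \<in> IT \<Longrightarrow> \<alpha> a = a \<and> \<alpha> c = c"
    unfolding IT_def IT_iff by auto
  have cl: "\<And>x y. x \<in> IT \<Longrightarrow> y \<in> IT \<Longrightarrow> eplus n x y \<in> IT \<and> emult n x y \<in> IT"
    unfolding IT_def using IT_eplus[OF ab] IT_emult[OF ab] by blast
  have ep: "\<And>x y z. z \<in> chain n \<Longrightarrow> eplus n x y z = max (x z) (y z)" by (simp add: eplus_def)
  have em: "\<And>x y z. z \<in> chain n \<Longrightarrow> emult n x y z = y (x z)" by (simp add: emult_def)
  define Q where "Q = {(k,l). a < k \<and> k \<le> b \<and> b < l \<and> l \<le> c}"
  define P where "P = {(k,l). a < k \<and> k \<le> l \<and> l \<le> c}"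
  define P1 where "P1 = {(k,l). b < k \<and> k \<le> l \<and> l \<le> b + (c - b)}"
  define P2 where "P2 = {(k,l). a < k \<and> k \<le> l \<and> l \<le> a + (b - a)}"
  let ?g = "\<lambda>(k,l). thr n a b c k l"
  have inj: "inj_on ?g P" unfolding P_def by (rule thr_inj[OF ab])
  have ITg: "IT = ?g ` P"
  proof
    show "IT \<subseteq> ?g ` P"
    proof
      fix \<alpha> assume "\<alpha> \<in> IT"
      then obtain k l where "a < k" "k \<le> l" "l \<le> c" "\<alpha> = thr n a b c k l"
        using IT_thr[OF ab] unfolding IT_def by blast
      then show "\<alpha> \<in> ?g ` P" unfolding P_def by (intro image_eqI[of _ _ "(k,l)"]) auto
    qed
    show "?g ` P \<subseteq> IT" unfolding P_def IT_def using thr_in_IT[OF ab] by auto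
  qed
  have RIg: "RI = ?g ` Q"
  proof -
    have "RI = {\<alpha> \<in> ?g ` P. \<alpha> b = b}" using RIc ITg by simp
    also have "\<dots> = ?g ` Q"
    proof
      show "{\<alpha> \<in> ?g ` P. \<alpha> b = b} \<subseteq> ?g ` Q"
        unfolding P_def Q_def using thr_b[OF ab] ab by (auto simp: image_iff split: if_splits)
      show "?g ` Q \<subseteq> {\<alpha> \<in> ?g ` P. \<alpha> b = b}"
      proof
        fix \<alpha> assume "\<alpha> \<in> ?g ` Q"
        then obtain k l where kl: "a < k" "k \<le> b" "b < l" "l \<le> c" "\<alpha> = thr n a b c k l"
          unfolding Q_def by auto
        have "\<alpha> \<in> ?g ` P" unfolding P_def using kl by (intro image_eqI[of _ _ "(k,l)"]) auto
        moreover have "\<alpha> b = b" using kl thr_b[OF ab] by simp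
        ultimately show "\<alpha> \<in> {\<alpha> \<in> ?g ` P. \<alpha> b = b}" by simp
      qed
    qed
    finally show ?thesis .
  qed
  have DIg: "IT - RI = ?g ` (P1 \<union> P2)"
  proof -
    have "IT - RI = {\<alpha> \<in> ?g ` P. \<alpha> b \<noteq> b}" using DIc ITg by simp
    also have "\<dots> = ?g ` (P1 \<union> P2)"
    proof
      show "{\<alpha> \<in> ?g ` P. \<alpha> b \<noteq> b} \<subseteq> ?g ` (P1 \<union> P2)"
        unfolding P_def P1_def P2_def using thr_b[OF ab] ab by (auto simp: image_iff split: if_splits)
      show "?g ` (P1 \<union> P2) \<subseteq> {\<alpha> \<in> ?g ` P. \<alpha> b \<noteq> b}"
      proof
        fix \<alpha> assume "\<alpha> \<in> ?g ` (P1 \<union> P2)"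
        then obtain k l where kl: "(k,l) \<in> P1 \<union> P2" "\<alpha> = thr n a b c k l" by auto
        have kl2: "a < k" "k \<le> l" "l \<le> c" "b < k \<or> l \<le> b"
          using kl(1) ab unfolding P1_def P2_def by auto
        have "\<alpha> \<in> ?g ` P" unfolding P_def using kl kl2 by (intro image_eqI[of _ _ "(k,l)"]) auto
        moreover have "\<alpha> b \<noteq> b" using kl kl2 thr_b[OF ab] ab by auto
        ultimately show "\<alpha> \<in> {\<alpha> \<in> ?g ` P. \<alpha> b \<noteq> b}" by simp
      qed
    qed
    finally show ?thesis .
  qed
  have QP: "Q \<subseteq> P" "P1 \<union> P2 \<subseteq> P" unfolding Q_def P_def P1_def P2_def using ab by auto
  have cardRI: "card RI = (b - a) * (c - b)"
  proof -
    have "card RI = card Q" unfolding RIg by (rule card_image[OF inj_on_subset[OF inj QP(1)]])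
    also have "Q = {a<..b} \<times> {b<..c}" unfolding Q_def by auto
    finally show ?thesis by simp
  qed
  have cardDI: "2 * card (IT - RI) = (c - b)^2 + (b - a)^2 + (c - a)"
  proof -
    have fP: "finite P" unfolding P_def by (rule finite_subset[of _ "{..c} \<times> {..c}"]) auto
    have "card (IT - RI) = card (P1 \<union> P2)" unfolding DIg by (rule card_image[OF inj_on_subset[OF inj QP(2)]])
    also have "\<dots> = card P1 + card P2"
      by (rule card_Un_disjoint) (use fP QP finite_subset in \<open>auto simp: P1_def P2_def\<close>)
    finally have "2 * card (IT - RI) = 2 * card P1 + 2 * card P2" by simp
    also have "\<dots> = (c - b) * (c - b + 1) + (b - a) * (b - a + 1)"
      unfolding P1_def P2_def tri_card by simp
    also have "\<dots> = (c - b)^2 + (b - a)^2 + (c - a)" using ab by (simp add: power2_eq_square algebra_simps)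
    finally show ?thesis .
  qed
  have gcc: "thr n a b c c c \<in> IT" unfolding IT_def using thr_in_IT[OF ab] ab by auto
  have gcc_b: "thr n a b c c c b = a" using thr_b[OF ab] ab by simp
  have gbc: "thr n a b c b c \<in> IT" unfolding IT_def using thr_in_IT[OF ab] ab by auto
  have gbc_b: "thr n a b c b c b = b" using thr_b[OF ab] ab by simp
  have S1: "is_subsemiring n RI IT"
    unfolding is_subsemiring_def RIc using gbc gbc_b cl ch fxd
    by (auto simp: ep em)
  have vb: "\<And>x. x \<in> IT \<Longrightarrow> x b \<noteq> b \<Longrightarrow> x b = a \<or> x b = c" using vals ch by blast
  have S2: "is_subsemiring n (IT - RI) IT"
    unfolding is_subsemiring_def DIc
  proof (intro conjI ballI)
    show "{\<alpha> \<in> IT. \<alpha> b \<noteq> b} \<noteq> {}" using gcc gcc_b ab by auto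
    show "{\<alpha> \<in> IT. \<alpha> b \<noteq> b} \<subseteq> IT" by auto
    fix x y assume x: "x \<in> {\<alpha> \<in> IT. \<alpha> b \<noteq> b}" and y: "y \<in> {\<alpha> \<in> IT. \<alpha> b \<noteq> b}"
    show "eplus n x y \<in> {\<alpha> \<in> IT. \<alpha> b \<noteq> b}" using x y cl vb[of x] vb[of y] ab ch
      by (auto simp: ep max_def)
    show "emult n x y \<in> {\<alpha> \<in> IT. \<alpha> b \<noteq> b}" using x y cl vb[of x] fxd[of y] ab ch
      by (auto simp: em)
  qed
  have I2: "is_ideal n (IT - RI) IT"
    unfolding is_ideal_def
  proof (intro conjI ballI)
    show "IT - RI \<noteq> {}" "IT - RI \<subseteq> IT" "\<And>x y. x \<in> IT - RI \<Longrightarrow> y \<in> IT - RI \<Longrightarrow> eplus n x y \<in> IT - RI"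
      using S2 unfolding is_subsemiring_def by auto
    fix r x assume r: "r \<in> IT" and x: "x \<in> IT - RI"
    show "emult n r x \<in> IT - RI" unfolding DIc using r x cl vb[of x] fxd[of x] vals[OF r ch(2)] ab ch
      by (auto simp: em DIc)
    show "emult n x r \<in> IT - RI" unfolding DIc using r x cl vb[of x] fxd[of r] ab ch
      by (auto simp: em DIc)
  qed
  have I1: "is_ideal n (Id_STR n a c) IT"
    unfolding is_ideal_def IDc
  proof (intro conjI ballI)
    show "{\<alpha> \<in> IT. \<forall>x\<in>chain n. \<alpha> x \<noteq> b} \<noteq> {}"
    proof -
      have "\<forall>x\<in>chain n. thr n a b c c c x \<noteq> b" using ab by (simp add: thr_def)
      then show ?thesis using gcc by blast
    qed
    show "{\<alpha> \<in> IT. \<forall>x\<in>chain n. \<alpha> x \<noteq> b} \<subseteq> IT" by auto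
    fix x y assume x: "x \<in> {\<alpha> \<in> IT. \<forall>x\<in>chain n. \<alpha> x \<noteq> b}" and y: "y \<in> {\<alpha> \<in> IT. \<forall>x\<in>chain n. \<alpha> x \<noteq> b}"
    show "eplus n x y \<in> {\<alpha> \<in> IT. \<forall>x\<in>chain n. \<alpha> x \<noteq> b}"
      using x y cl by (auto simp: ep max_def)
  next
    fix r x assume r: "r \<in> IT" and x: "x \<in> {\<alpha> \<in> IT. \<forall>x\<in>chain n. \<alpha> x \<noteq> b}"
    have rc: "\<And>z. z \<in> chain n \<Longrightarrow> r z \<in> chain n" using r unfolding IT_def IT_iff by auto
    have xv: "\<And>z. z \<in> chain n \<Longrightarrow> x z = a \<or> x z = c" using x vals by blast
    show "emult n r x \<in> {\<alpha> \<in> IT. \<forall>x\<in>chain n. \<alpha> x \<noteq> b}"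
      using r x cl rc by (auto simp: em)
    show "emult n x r \<in> {\<alpha> \<in> IT. \<forall>x\<in>chain n. \<alpha> x \<noteq> b}"
    proof -
      have "\<forall>z\<in>chain n. emult n x r z \<noteq> b"
      proof
        fix z assume z: "z \<in> chain n"
        then have "emult n x r z = r (x z)" by (rule em)
        moreover have "x z = a \<or> x z = c" by (rule xv[OF z])
        ultimately show "emult n x r z \<noteq> b" using fxd[OF r] ab by auto
      qed
      then show ?thesis using r x cl by auto
    qed
  qed
  show ?thesis using S1 S2 I1 I2 cardRI cardDI by blast
qed



end
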